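(* For filters $\Xi,\Upsilon\in P_{III*}$, one has $\mathcal C_{\Xi\text{-unc}}=\mathcal C_{\Upsilon\text{-unc}}$ if and only if all four of the following inclusions hold: $(\wedge\Xi)\cap(\vee\overline\Upsilon)\subseteq\vee\overline\Xi$, $\quad\wedge\Xi\subseteq(\vee\overline\Xi)\cup(\wedge\Upsilon)$, $(\wedge\Upsilon)\cap(\vee\overline\Xi)\subseteq\vee\overline\Upsilon$, $\quad\wedge\Upsilon\subseteq(\vee\overline\Upsilon)\cup(\wedge\Xi)$.
   Context: Let $n\ge1$, $L=\{1,\dots,n\}$, and for $i\in L$ let $\mathcal H_i$ be a Hilbert space with $1<\dim\mathcal H_i<\infty$; $\mathcal H_X=\bigotimes_{i\in X}\mathcal H_i$ and $\mathcal D_X$ is the set of density operators on $\mathcal H_X$. $P_I$ is the set of partitions of $L$ ordered by refinement ($\upsilon\preceq\xi$ iff every part of $\upsilon$ lies in a part of $\xi$). For $\xi\in P_I$, $\mathcal D_{\xi\text{-unc}}=\{\varrho\in\mathcal D_L:\varrho=\bigotimes_{X\in\xi}\varrho_X,\ \varrho_X\in\mathcal D_X\}$, and for a set $S\subseteq P_I$, $\mathcal D_{S\text{-unc}}=\bigcup_{\xi\in S}\mathcal D_{\xi\text{-unc}}$. $P_{II}$ is the set of nonempty down-sets of $P_I$, ordered by inclusion. $P_{II*}\subseteq P_{II}$ is a fixed nonempty subset, and $P_{III*}$ is the set of nonempty up-sets of $P_{II*}$. For $\Xi\in P_{III*}$: $\overline\Xi=P_{II*}\setminus\Xi$, $\wedge\Xi=\bigcap_{\boldsymbol\xi\in\Xi}\boldsymbol\xi$,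 $\vee\overline\Xi=\bigcup_{\boldsymbol\xi'\in\overline\Xi}\boldsymbol\xi'$ (equal to $\emptyset$ if $\overline\Xi=\emptyset$), and $\mathcal C_{\Xi\text{-unc}}=\bigcap_{\boldsymbol\xi'\in\overline\Xi}(\mathcal D_L\setminus\mathcal D_{\boldsymbol\xi'\text{-unc}})\cap\bigcap_{\boldsymbol\xi\in\Xi}\mathcal D_{\boldsymbol\xi\text{-unc}}$. *)

theory Defs
  imports Complex_Main "HOL-Library.Disjoint_Sets" "HOL-Library.FuncSet"
begin

text \<open>Site i carries the Hilbert space C^(d i) with
  orthonormal basis indexed by {..< d i}. The space H_X for X a subset of L has
  orthonormal basis indexed by the extensional functions in PiE X (\<lambda>i. {..< d i});
  an operator on H_X is represented by its matrix in this basis, a function of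
  two basis indices, required to vanish outside basis x basis.\<close>

type_synonym op = "(nat \<Rightarrow> nat) \<Rightarrow> (nat \<Rightarrow> nat) \<Rightarrow> complex"

definition sites :: "nat \<Rightarrow> nat set" where
  "sites n = {1..n}"

definition basis :: "(nat \<Rightarrow> nat) \<Rightarrow> nat set \<Rightarrow> (nat \<Rightarrow> nat) set" where
  "basis d X = PiE X (\<lambda>i. {..< d i})"

definition density :: "(nat \<Rightarrow> nat) \<Rightarrow> nat set \<Rightarrow> op \<Rightarrow> bool" where
  "density d X \<rho> \<longleftrightarrow>
     (\<forall>a b. \<rho> a b \<noteq> 0 \<longrightarrow> a \<in> basis d X \<and> b \<in> basis d X) \<and>
     (\<forall>v :: (nat \<Rightarrow> nat) \<Rightarrow> complex.
        Im (\<Sum>a\<in>basis d X. \<Sum>b\<in>basis d X. cnj (v a) * \<rho> a b * v b) = 0 \<and>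
        Re (\<Sum>a\<in>basis d X. \<Sum>b\<in>basis d X. cnj (v a) * \<rho> a b * v b) \<ge> 0) \<and>
     (\<Sum>a\<in>basis d X. \<rho> a a) = 1"

definition densities :: "(nat \<Rightarrow> nat) \<Rightarrow> nat set \<Rightarrow> op set" where
  "densities d X = {\<rho>. density d X \<rho>}"

definition tensor :: "(nat \<Rightarrow> nat) \<Rightarrow> nat set \<Rightarrow> nat set set \<Rightarrow> (nat set \<Rightarrow> op) \<Rightarrow> op" where
  "tensor d X \<xi> \<rho>s = (\<lambda>a b. if a \<in> basis d X \<and> b \<in> basis d X
      then (\<Prod>Y\<in>\<xi>. \<rho>s Y (restrict a Y) (restrict b Y)) else 0)"

definition partitions :: "nat \<Rightarrow> nat set set set" where
  "partitions n = {\<xi>. partition_on (sites n) \<xi>}"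

definition refines :: "nat set set \<Rightarrow> nat set set \<Rightarrow> bool" where
  "refines \<upsilon> \<xi> \<longleftrightarrow> (\<forall>Y\<in>\<upsilon>. \<exists>X\<in>\<xi>. Y \<subseteq> X)"

definition unc :: "(nat \<Rightarrow> nat) \<Rightarrow> nat \<Rightarrow> nat set set \<Rightarrow> op set" where
  "unc d n \<xi> = {\<rho> \<in> densities d (sites n).
      \<exists>\<rho>s. (\<forall>X\<in>\<xi>. \<rho>s X \<in> densities d X) \<and> \<rho> = tensor d (sites n) \<xi> \<rho>s}"

definition uncS :: "(nat \<Rightarrow> nat) \<Rightarrow> nat \<Rightarrow> nat set set set \<Rightarrow> op set" where
  "uncS d n S = (\<Union>\<xi>\<in>S. unc d n \<xi>)"

definition P_II :: "nat \<Rightarrow> nat set set set set" where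
  "P_II n = {S. S \<subseteq> partitions n \<and> S \<noteq> {} \<and>
      (\<forall>\<xi>\<in>S. \<forall>\<upsilon>\<in>partitions n. refines \<upsilon> \<xi> \<longrightarrow> \<upsilon> \<in> S)}"

definition P_III :: "nat set set set set \<Rightarrow> nat set set set set set" where
  "P_III PIIs = {\<Xi>. \<Xi> \<subseteq> PIIs \<and> \<Xi> \<noteq> {} \<and>
      (\<forall>a\<in>\<Xi>. \<forall>b\<in>PIIs. a \<subseteq> b \<longrightarrow> b \<in> \<Xi>)}"

definition meet :: "nat set set set set \<Rightarrow> nat set set set" where
  "meet \<Xi> = \<Inter>\<Xi>"

definition join_compl :: "nat set set set set \<Rightarrow> nat set set set set \<Rightarrow> nat set set set" where
  "join_compl PIIs \<Xi> = \<Union>(PIIs - \<Xi>)"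

definition C_unc :: "(nat \<Rightarrow> nat) \<Rightarrow> nat \<Rightarrow> nat set set set set \<Rightarrow> nat set set set set \<Rightarrow> op set" where
  "C_unc d n PIIs \<Xi> =
     (\<Inter>s\<in>PIIs - \<Xi>. densities d (sites n) - uncS d n s) \<inter> (\<Inter>s\<in>\<Xi>. uncS d n s)"

end

theory Submission
  imports Defs
begin


definition merge :: "nat set \<Rightarrow> (nat\<Rightarrow>nat) \<Rightarrow> (nat\<Rightarrow>nat) \<Rightarrow> (nat\<Rightarrow>nat)" where
  "merge Z p c = (\<lambda>i. if i \<in> Z then p i else c i)"

lemma basis_ext: "x \<in> basis d X \<Longrightarrow> i \<notin> X \<Longrightarrow> x i = undefined"
  by (auto simp: basis_def PiE_iff extensional_def)

lemma merge_in: "p \<in> basis d Z \<Longrightarrow> c \<in> basis d W \<Longrightarrow> merge Z p c \<in> basis d (Z \<union> W)"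
  by (auto simp: basis_def merge_def PiE_iff extensional_def)

lemma merge_in2: "a \<in> basis d V \<Longrightarrow> a' \<in> basis d V \<Longrightarrow> Y \<subseteq> V \<Longrightarrow> merge Y a a' \<in> basis d V"
  by (auto simp: basis_def merge_def PiE_iff extensional_def)

lemma restrict_merge_Z: "p \<in> basis d Z \<Longrightarrow> restrict (merge Z p c) Z = p"
  by (auto simp: basis_def merge_def PiE_iff extensional_def fun_eq_iff)

lemma restrict_merge_W: "c \<in> basis d W \<Longrightarrow> Z \<inter> W = {} \<Longrightarrow> restrict (merge Z p c) W = c"
  by (auto simp: basis_def merge_def PiE_iff extensional_def fun_eq_iff)

lemma restrict_merge: "restrict (merge X a c) Y = merge X (restrict a Y) (restrict c Y)"
  by (auto simp: merge_def fun_eq_iff)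

lemma restrict_merge_disj: "Y \<inter> Y' = {} \<Longrightarrow> restrict (merge Y p c) Y' = restrict c Y'"
  by (auto simp: merge_def fun_eq_iff)

lemma merge_restrict: "x \<in> basis d (Z \<union> W) \<Longrightarrow> merge Z (restrict x Z) (restrict x W) = x"
  by (auto simp: basis_def merge_def PiE_iff extensional_def fun_eq_iff)

lemma restrict_basis: "a \<in> basis d V \<Longrightarrow> X \<subseteq> V \<Longrightarrow> restrict a X \<in> basis d X"
  by (auto simp: basis_def PiE_iff)

lemma restrict_basis_self: "a \<in> basis d V \<Longrightarrow> restrict a V = a"
  by (auto simp: basis_def PiE_iff extensional_restrict)

lemma finite_basis: "finite X \<Longrightarrow> finite (basis d X)"
  by (auto simp: basis_def intro: finite_PiE)

lemma basis_empty: "basis d {} = {\<lambda>_. undefined}"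
  by (simp add: basis_def)

lemma merge_bij: "Z \<inter> W = {} \<Longrightarrow>
  bij_betw (\<lambda>(p,c). merge Z p c) (basis d Z \<times> basis d W) (basis d (Z \<union> W))"
  apply (rule bij_betw_byWitness[where f' = "\<lambda>x. (restrict x Z, restrict x W)"])
  by (auto simp: restrict_merge_Z restrict_merge_W merge_restrict merge_in restrict_basis)

lemma sum_split: "Z \<inter> W = {} \<Longrightarrow>
  (\<Sum>x\<in>basis d (Z \<union> W). f x) = (\<Sum>p\<in>basis d Z. \<Sum>c\<in>basis d W. f (merge Z p c))"
proof -
  assume h: "Z \<inter> W = {}"
  have "(\<Sum>x\<in>basis d (Z \<union> W). f x) = (\<Sum>pc\<in>basis d Z \<times> basis d W. f ((\<lambda>(p,c). merge Z p c) pc))"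
    using sum.reindex_bij_betw[OF merge_bij[OF h, of d], of f] by simp
  also have "\<dots> = (\<Sum>p\<in>basis d Z. \<Sum>c\<in>basis d W. f (merge Z p c))"
    by (simp add: sum.cartesian_product split_def)
  finally show ?thesis .
qed

lemma sum_prod_blocks:
  fixes g :: "nat set \<Rightarrow> (nat \<Rightarrow> nat) \<Rightarrow> complex"
  assumes "finite \<eta>" "disjoint_family_on S \<eta>"
  shows "(\<Sum>c\<in>basis d (\<Union>(S`\<eta>)). \<Prod>Y\<in>\<eta>. g Y (restrict c (S Y)))
       = (\<Prod>Y\<in>\<eta>. \<Sum>c\<in>basis d (S Y). g Y c)"
  using assms
proof (induction \<eta> rule: finite_induct)
  case empty
  show ?case by (simp add: basis_def)
next
  case (insert Y \<eta>)
  have dj: "disjoint_family_on S \<eta>" using insert.prems disjoint_family_on_mono[OF subset_insertI] by metis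
  have d1: "S Y \<inter> \<Union>(S`\<eta>) = {}" using insert.prems insert.hyps
    by (auto simp: disjoint_family_on_def)
  have d2: "\<And>Y'. Y' \<in> \<eta> \<Longrightarrow> S Y \<inter> S Y' = {}" using insert.prems insert.hyps
    by (auto simp: disjoint_family_on_def)
  have "(\<Sum>c\<in>basis d (\<Union>(S`insert Y \<eta>)). \<Prod>Y'\<in>insert Y \<eta>. g Y' (restrict c (S Y')))
      = (\<Sum>p\<in>basis d (S Y). \<Sum>c\<in>basis d (\<Union>(S`\<eta>)).
           \<Prod>Y'\<in>insert Y \<eta>. g Y' (restrict (merge (S Y) p c) (S Y')))"
    using sum_split[OF d1, where d=d] by simp
  also have "\<dots> = (\<Sum>p\<in>basis d (S Y). \<Sum>c\<in>basis d (\<Union>(S`\<eta>)).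
           g Y p * (\<Prod>Y'\<in>\<eta>. g Y' (restrict c (S Y'))))"
  proof (intro sum.cong refl)
    fix p c assume p: "p \<in> basis d (S Y)" and c: "c \<in> basis d (\<Union>(S`\<eta>))"
    have "(\<Prod>Y'\<in>\<eta>. g Y' (restrict (merge (S Y) p c) (S Y'))) = (\<Prod>Y'\<in>\<eta>. g Y' (restrict c (S Y')))"
      by (intro prod.cong refl) (simp add: restrict_merge_disj d2)
    then show "(\<Prod>Y'\<in>insert Y \<eta>. g Y' (restrict (merge (S Y) p c) (S Y'))) =
         g Y p * (\<Prod>Y'\<in>\<eta>. g Y' (restrict c (S Y')))"
      using insert.hyps p by (simp add: restrict_merge_Z)
  qed
  also have "\<dots> = (\<Sum>p\<in>basis d (S Y). g Y p) * (\<Sum>c\<in>basis d (\<Union>(S`\<eta>)). \<Prod>Y'\<in>\<eta>. g Y' (restrict c (S Y')))"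
    by (rule sum_product[symmetric])
  also have "\<dots> = (\<Prod>Y'\<in>insert Y \<eta>. \<Sum>c\<in>basis d (S Y'). g Y' c)"
    by (simp only: prod.insert[OF insert.hyps] insert.IH[OF dj])
  finally show ?case .
qed



definition TT :: "(nat \<Rightarrow> nat) \<Rightarrow> nat set \<Rightarrow> nat set \<Rightarrow> op \<Rightarrow> op" where
  "TT d X Y \<sigma> p q = (\<Sum>c\<in>basis d (Y - X). \<sigma> (merge X p c) (merge X q c))"

lemma restrict_diff: "c \<in> basis d (V - X) \<Longrightarrow> restrict c Y = restrict c (Y - X)"
  by (auto simp: fun_eq_iff basis_ext)

lemma tensor_eval: "a \<in> basis d V \<Longrightarrow> b \<in> basis d V \<Longrightarrow>
   tensor d V \<xi> \<rho>s a b = (\<Prod>Y\<in>\<xi>. \<rho>s Y (restrict a Y) (restrict b Y))"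
  by (simp add: tensor_def)

lemma G:
  assumes P: "partition_on V \<eta>" and fV: "finite V" and XV: "X \<subseteq> V"
    and a: "a' \<in> basis d X" and b: "b' \<in> basis d X"
  shows "(\<Sum>c\<in>basis d (V - X). tensor d V \<eta> \<sigma>s (merge X a' c) (merge X b' c))
       = (\<Prod>Y\<in>\<eta>. TT d X Y (\<sigma>s Y) (restrict a' Y) (restrict b' Y))"
proof -
  have UV: "\<Union>\<eta> = V" using P by (simp add: partition_on_def)
  have fe: "finite \<eta>" using fV UV by (metis finite_UnionD)
  have dj: "disjoint_family_on (\<lambda>Y. Y - X) \<eta>" using P
    by (auto simp: partition_on_def disjoint_family_on_def disjoint_def)
  have U: "\<Union>((\<lambda>Y. Y - X) ` \<eta>) = V - X" using UV by auto
  have XV': "X \<union> (V - X) = V" using XV by auto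
  have "(\<Sum>c\<in>basis d (V - X). tensor d V \<eta> \<sigma>s (merge X a' c) (merge X b' c))
      = (\<Sum>c\<in>basis d (V - X). \<Prod>Y\<in>\<eta>. \<sigma>s Y (merge X (restrict a' Y) (restrict c (Y - X)))
                                            (merge X (restrict b' Y) (restrict c (Y - X))))"
  proof (intro sum.cong refl)
    fix c assume c: "c \<in> basis d (V - X)"
    have m1: "merge X a' c \<in> basis d V" and m2: "merge X b' c \<in> basis d V"
      using merge_in[OF a c] merge_in[OF b c] XV' by auto
    show "tensor d V \<eta> \<sigma>s (merge X a' c) (merge X b' c) = (\<Prod>Y\<in>\<eta>. \<sigma>s Y (merge X (restrict a' Y) (restrict c (Y - X)))
                                            (merge X (restrict b' Y) (restrict c (Y - X))))"
      by (simp add: tensor_eval[OF m1 m2] restrict_merge restrict_diff[OF c, symmetric])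
  qed
  also have "\<dots> = (\<Prod>Y\<in>\<eta>. TT d X Y (\<sigma>s Y) (restrict a' Y) (restrict b' Y))"
    using sum_prod_blocks[OF fe dj, where d=d and g="\<lambda>Y c. \<sigma>s Y (merge X (restrict a' Y) c) (merge X (restrict b' Y) c)"]
    unfolding U TT_def by simp
  finally show ?thesis .
qed

definition tr1 :: "(nat \<Rightarrow> nat) \<Rightarrow> nat set \<Rightarrow> op \<Rightarrow> bool" where
  "tr1 d Y \<sigma> \<longleftrightarrow> (\<Sum>c\<in>basis d Y. \<sigma> c c) = 1"

lemma T1:
  assumes "X \<inter> Y = {}" "a' \<in> basis d X" "b' \<in> basis d X" "tr1 d Y \<sigma>"
  shows "TT d X Y \<sigma> (restrict a' Y) (restrict b' Y) = 1"
proof -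
  have YX: "Y - X = Y" using assms(1) by auto
  have "\<And>c p. p \<in> basis d X \<Longrightarrow> c \<in> basis d Y \<Longrightarrow> merge X (restrict p Y) c = c"
    using assms(1) by (auto simp: merge_def fun_eq_iff basis_ext)
  then show ?thesis using assms unfolding TT_def tr1_def YX by simp
qed

lemma T2:
  assumes "Y \<subseteq> X"
  shows "TT d X Y \<sigma> (restrict p Y) (restrict q Y) = \<sigma> (restrict p Y) (restrict q Y)"
proof -
  have YX: "Y - X = {}" using assms by auto
  have "\<And>p. merge X (restrict p Y) (\<lambda>_. undefined) = restrict p Y"
    using assms by (auto simp: merge_def fun_eq_iff)
  then show ?thesis unfolding TT_def YX basis_empty by simp
qed

lemma T3:
  assumes "a \<in> basis d V" "b \<in> basis d V"
  shows "TT d X Y \<sigma> (restrict a (X \<inter> Y)) (restrict b (X \<inter> Y))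
       = TT d (X \<inter> Y) Y \<sigma> (restrict a (X \<inter> Y)) (restrict b (X \<inter> Y))"
proof -
  have YX: "Y - (X \<inter> Y) = Y - X" by auto
  have "\<And>c p. c \<in> basis d (Y - X) \<Longrightarrow> merge X (restrict p (X \<inter> Y)) c = merge (X \<inter> Y) (restrict p (X \<inter> Y)) c"
    by (auto simp: merge_def fun_eq_iff basis_ext)
  then show ?thesis unfolding TT_def YX by simp
qed

lemma restrict_self_sub: assumes p: "p \<in> basis d Z" and ZY: "Z \<subseteq> Y" shows "restrict p Y = p"
proof (rule ext)
  fix i show "restrict p Y i = p i"
  proof (cases "i \<in> Y")
    case True then show ?thesis by simp
  next
    case False then have "i \<notin> Z" using ZY by auto
    then show ?thesis using False basis_ext[OF p] by simp
  qed
qed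

lemma M_single:
  assumes P: "partition_on V \<eta>" and fV: "finite V" and tr: "\<forall>Y\<in>\<eta>. tr1 d Y (\<sigma>s Y)"
    and Y: "Y \<in> \<eta>" and ZY: "Z \<subseteq> Y" and p: "p \<in> basis d Z" and q: "q \<in> basis d Z"
  shows "(\<Sum>c\<in>basis d (V - Z). tensor d V \<eta> \<sigma>s (merge Z p c) (merge Z q c)) = TT d Z Y (\<sigma>s Y) p q"
proof -
  have UV: "\<Union>\<eta> = V" using P by (simp add: partition_on_def)
  have fe: "finite \<eta>" using fV UV by (metis finite_UnionD)
  have ZV: "Z \<subseteq> V" using Y ZY UV by auto
  have "(\<Sum>c\<in>basis d (V - Z). tensor d V \<eta> \<sigma>s (merge Z p c) (merge Z q c)) = (\<Prod>Y'\<in>\<eta>. TT d Z Y' (\<sigma>s Y') (restrict p Y') (restrict q Y'))"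
    by (rule G[OF P fV ZV p q])
  also have "(\<Prod>Y'\<in>\<eta>. TT d Z Y' (\<sigma>s Y') (restrict p Y') (restrict q Y'))
      = (\<Prod>Y'\<in>\<eta>. if Y' = Y then TT d Z Y (\<sigma>s Y) p q else 1)"
  proof (intro prod.cong refl)
    fix Y' assume Y': "Y' \<in> \<eta>"
    show "TT d Z Y' (\<sigma>s Y') (restrict p Y') (restrict q Y') = (if Y' = Y then TT d Z Y (\<sigma>s Y) p q else 1)"
    proof (cases "Y' = Y")
      case True then show ?thesis using restrict_self_sub[OF p ZY] restrict_self_sub[OF q ZY] by simp
    next
      case False
      then have "Y \<inter> Y' = {}" using P Y Y' by (auto simp: partition_on_def disjoint_def)
      then have "Z \<inter> Y' = {}" using ZY by auto
      then show ?thesis using T1[OF _ p q, of Y' "\<sigma>s Y'"] tr Y' False by simp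
    qed
  qed
  also have "\<dots> = TT d Z Y (\<sigma>s Y) p q" using fe Y by (simp add: prod.delta')
  finally show ?thesis .
qed

lemma M2:
  assumes P: "partition_on V \<eta>" and fV: "finite V" and tr: "\<forall>Y\<in>\<eta>. tr1 d Y (\<sigma>s Y)"
    and Y: "Y \<in> \<eta>" and p: "p \<in> basis d Y" and q: "q \<in> basis d Y"
  shows "(\<Sum>c\<in>basis d (V - Y). tensor d V \<eta> \<sigma>s (merge Y p c) (merge Y q c)) = \<sigma>s Y p q"
  using M_single[OF P fV tr Y order.refl p q] T2[of Y Y d "\<sigma>s Y" p q]
    restrict_self_sub[OF p order.refl] restrict_self_sub[OF q order.refl] by simp



definition marg :: "(nat \<Rightarrow> nat) \<Rightarrow> nat set \<Rightarrow> nat set \<Rightarrow> op \<Rightarrow> op" where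
  "marg d V Z \<rho> = (\<lambda>p q. if p \<in> basis d Z \<and> q \<in> basis d Z
      then (\<Sum>c\<in>basis d (V - Z). \<rho> (merge Z p c) (merge Z q c)) else 0)"

lemma sum_collapse:
  assumes ZV: "Z \<subseteq> V" and c: "c \<in> basis d (V - Z)" and fV: "finite V"
  shows "(\<Sum>x\<in>basis d V. if restrict x (V - Z) = c then f (restrict x Z) x else 0)
       = (\<Sum>p\<in>basis d Z. f p (merge Z p c))"
proof -
  have VV: "basis d V = basis d (Z \<union> (V - Z))" using ZV by (simp add: Un_absorb1)
  have dj: "Z \<inter> (V - Z) = {}" by auto
  have "(\<Sum>x\<in>basis d V. if restrict x (V - Z) = c then f (restrict x Z) x else 0)
     = (\<Sum>p\<in>basis d Z. \<Sum>c'\<in>basis d (V - Z). if restrict (merge Z p c') (V - Z) = c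
            then f (restrict (merge Z p c') Z) (merge Z p c') else 0)"
    unfolding VV by (rule sum_split[OF dj])
  also have "\<dots> = (\<Sum>p\<in>basis d Z. \<Sum>c'\<in>basis d (V - Z). if c' = c then f p (merge Z p c') else 0)"
  proof (intro sum.cong refl)
    fix p c' assume p: "p \<in> basis d Z" and c': "c' \<in> basis d (V - Z)"
    show "(if restrict (merge Z p c') (V - Z) = c then f (restrict (merge Z p c') Z) (merge Z p c') else 0)
        = (if c' = c then f p (merge Z p c') else 0)"
      by (simp only: restrict_merge_W[OF c' dj, of p] restrict_merge_Z[OF p, of c'])
  qed
  also have "\<dots> = (\<Sum>p\<in>basis d Z. f p (merge Z p c))"
    using c finite_basis[of "V - Z" d] fV by (simp add: sum.delta)
  finally show ?thesis .
qed

lemma density_tr1: "density d X \<sigma> \<Longrightarrow> tr1 d X \<sigma>"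
  by (simp add: density_def tr1_def)

lemma density_supp: "density d X \<rho> \<Longrightarrow> \<not> (a \<in> basis d X \<and> b \<in> basis d X) \<Longrightarrow> \<rho> a b = 0"
  by (auto simp: density_def)

lemma marg_density:
  assumes D: "density d V \<rho>" and ZV: "Z \<subseteq> V" and fV: "finite V"
  shows "density d Z (marg d V Z \<rho>)"
proof -
  have dj: "Z \<inter> (V - Z) = {}" by auto
  have VV: "basis d V = basis d (Z \<union> (V - Z))" using ZV by (simp add: Un_absorb1)
  have pos: "Im (\<Sum>a\<in>basis d Z. \<Sum>b\<in>basis d Z. cnj (v a) * marg d V Z \<rho> a b * v b) = 0 \<and>
        Re (\<Sum>a\<in>basis d Z. \<Sum>b\<in>basis d Z. cnj (v a) * marg d V Z \<rho> a b * v b) \<ge> 0" for v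
  proof -
    define Q where "Q c = (\<Sum>p\<in>basis d Z. \<Sum>q\<in>basis d Z. cnj (v p) * \<rho> (merge Z p c) (merge Z q c) * v q)" for c
    have eq: "(\<Sum>a\<in>basis d Z. \<Sum>b\<in>basis d Z. cnj (v a) * marg d V Z \<rho> a b * v b)
        = (\<Sum>c\<in>basis d (V - Z). Q c)"
    proof -
      have "(\<Sum>a\<in>basis d Z. \<Sum>b\<in>basis d Z. cnj (v a) * marg d V Z \<rho> a b * v b)
          = (\<Sum>a\<in>basis d Z. \<Sum>b\<in>basis d Z. \<Sum>c\<in>basis d (V - Z). cnj (v a) * \<rho> (merge Z a c) (merge Z b c) * v b)"
        by (intro sum.cong refl) (simp add: marg_def sum_distrib_left sum_distrib_right)
      also have "\<dots> = (\<Sum>a\<in>basis d Z. \<Sum>c\<in>basis d (V - Z). \<Sum>b\<in>basis d Z. cnj (v a) * \<rho> (merge Z a c) (merge Z b c) * v b)"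
        by (rule sum.cong[OF refl], rule sum.swap)
      also have "\<dots> = (\<Sum>c\<in>basis d (V - Z). \<Sum>a\<in>basis d Z. \<Sum>b\<in>basis d Z. cnj (v a) * \<rho> (merge Z a c) (merge Z b c) * v b)"
        by (rule sum.swap)
      finally show ?thesis by (simp add: Q_def)
    qed
    have Qc: "Im (Q c) = 0 \<and> Re (Q c) \<ge> 0" if c: "c \<in> basis d (V - Z)" for c
    proof -
      define w where "w x = (if restrict x (V - Z) = c then v (restrict x Z) else 0)" for x
      have inner: "(\<Sum>y\<in>basis d V. cnj (w x) * \<rho> x y * w y) = (\<Sum>q\<in>basis d Z. cnj (w x) * \<rho> x (merge Z q c) * v q)" for x
      proof -
        have "(\<Sum>y\<in>basis d V. cnj (w x) * \<rho> x y * w y)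
           = (\<Sum>y\<in>basis d V. if restrict y (V - Z) = c then (\<lambda>q y. cnj (w x) * \<rho> x y * v q) (restrict y Z) y else 0)"
          by (intro sum.cong refl) (simp add: w_def)
        also have "\<dots> = (\<Sum>q\<in>basis d Z. cnj (w x) * \<rho> x (merge Z q c) * v q)"
          by (rule sum_collapse[OF ZV c fV])
        finally show ?thesis .
      qed
      have "(\<Sum>x\<in>basis d V. \<Sum>y\<in>basis d V. cnj (w x) * \<rho> x y * w y)
          = (\<Sum>x\<in>basis d V. \<Sum>q\<in>basis d Z. cnj (w x) * \<rho> x (merge Z q c) * v q)"
        using inner by simp
      also have "\<dots> = (\<Sum>x\<in>basis d V. if restrict x (V - Z) = c then
            (\<lambda>p x. \<Sum>q\<in>basis d Z. cnj (v p) * \<rho> x (merge Z q c) * v q) (restrict x Z) x else 0)"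
        by (intro sum.cong refl) (simp add: w_def)
      also have "\<dots> = Q c"
        unfolding Q_def by (rule sum_collapse[OF ZV c fV])
      finally have QQ: "(\<Sum>x\<in>basis d V. \<Sum>y\<in>basis d V. cnj (w x) * \<rho> x y * w y) = Q c" .
      have "\<forall>v :: (nat \<Rightarrow> nat) \<Rightarrow> complex.
        Im (\<Sum>a\<in>basis d V. \<Sum>b\<in>basis d V. cnj (v a) * \<rho> a b * v b) = 0 \<and>
        Re (\<Sum>a\<in>basis d V. \<Sum>b\<in>basis d V. cnj (v a) * \<rho> a b * v b) \<ge> 0"
        using D unfolding density_def by blast
      then have "Im (\<Sum>x\<in>basis d V. \<Sum>y\<in>basis d V. cnj (w x) * \<rho> x y * w y) = 0 \<and>
        Re (\<Sum>x\<in>basis d V. \<Sum>y\<in>basis d V. cnj (w x) * \<rho> x y * w y) \<ge> 0"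
        by (rule spec)
      then show ?thesis unfolding QQ .
    qed
    show ?thesis unfolding eq using Qc by (simp add: sum_nonneg)
  qed
  have tr: "(\<Sum>a\<in>basis d Z. marg d V Z \<rho> a a) = 1"
  proof -
    have "(\<Sum>a\<in>basis d Z. marg d V Z \<rho> a a) = (\<Sum>a\<in>basis d Z. \<Sum>c\<in>basis d (V - Z). \<rho> (merge Z a c) (merge Z a c))"
      by (intro sum.cong refl) (simp add: marg_def)
    also have "\<dots> = (\<Sum>x\<in>basis d V. \<rho> x x)"
      unfolding VV by (rule sum_split[OF dj, symmetric])
    also have "\<dots> = 1" using D by (simp add: density_def)
    finally show ?thesis .
  qed
  show ?thesis unfolding density_def using pos tr by (auto simp: marg_def)
qed



definition meetP :: "nat set set \<Rightarrow> nat set set \<Rightarrow> nat set set" where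
  "meetP \<xi> \<eta> = {X \<inter> Y | X Y. X \<in> \<xi> \<and> Y \<in> \<eta> \<and> X \<inter> Y \<noteq> {}}"

lemma part_disj: "partition_on V \<xi> \<Longrightarrow> X \<in> \<xi> \<Longrightarrow> X' \<in> \<xi> \<Longrightarrow> X \<noteq> X' \<Longrightarrow> X \<inter> X' = {}"
  by (metis partition_onD2 disjointD)

lemma part_eq: "partition_on V \<xi> \<Longrightarrow> X \<in> \<xi> \<Longrightarrow> X' \<in> \<xi> \<Longrightarrow> i \<in> X \<Longrightarrow> i \<in> X' \<Longrightarrow> X = X'"
  using part_disj by blast

lemma meetP_I: "X \<in> \<xi> \<Longrightarrow> Y \<in> \<eta> \<Longrightarrow> X \<inter> Y \<noteq> {} \<Longrightarrow> X \<inter> Y \<in> meetP \<xi> \<eta>"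
  unfolding meetP_def mem_Collect_eq by (intro exI[of _ X] exI[of _ Y]) simp

lemma meetP_partition:
  assumes "partition_on V \<xi>" "partition_on V \<eta>"
  shows "partition_on V (meetP \<xi> \<eta>)"
proof (rule partition_onI)
  show "\<Union>(meetP \<xi> \<eta>) = V"
  proof
    show "\<Union>(meetP \<xi> \<eta>) \<subseteq> V" using assms by (auto simp: meetP_def partition_on_def)
    show "V \<subseteq> \<Union>(meetP \<xi> \<eta>)"
    proof
      fix i assume "i \<in> V"
      then obtain X Y where "X \<in> \<xi>" "Y \<in> \<eta>" "i \<in> X" "i \<in> Y" using assms
        by (metis UnionE partition_onD1)
      then have "X \<inter> Y \<in> meetP \<xi> \<eta>" by (intro meetP_I) auto
      then show "i \<in> \<Union>(meetP \<xi> \<eta>)" using \<open>i \<in> X\<close> \<open>i \<in> Y\<close> by blast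
    qed
  qed
  show "disjnt p q" if pm: "p \<in> meetP \<xi> \<eta>" and qm: "q \<in> meetP \<xi> \<eta>" and ne: "p \<noteq> q" for p q
  proof -
    obtain X Y where p: "p = X \<inter> Y" "X \<in> \<xi>" "Y \<in> \<eta>" using pm unfolding meetP_def by auto
    obtain X' Y' where q: "q = X' \<inter> Y'" "X' \<in> \<xi>" "Y' \<in> \<eta>" using qm unfolding meetP_def by auto
    have "X \<noteq> X' \<or> Y \<noteq> Y'" using p q ne by blast
    then have "X \<inter> X' = {} \<or> Y \<inter> Y' = {}"
      using part_disj[OF assms(1) p(2) q(2)] part_disj[OF assms(2) p(3) q(3)] by blast
    then show ?thesis using p q by (auto simp: disjnt_def)
  qed
  show "{} \<notin> meetP \<xi> \<eta>" unfolding meetP_def by auto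
qed

lemma refines_refl: "refines \<xi> \<xi>"
  by (auto simp: refines_def)

lemma refines_trans: "refines a b \<Longrightarrow> refines b c \<Longrightarrow> refines a c"
  unfolding refines_def by (meson order.trans)

lemma meetP_refines: "refines (meetP \<xi> \<eta>) \<xi>" "refines (meetP \<xi> \<eta>) \<eta>"
  unfolding refines_def meetP_def by auto

lemma meet_closed:
  assumes fV: "finite V" and D: "density d V \<rho>"
    and P\<xi>: "partition_on V \<xi>" and P\<eta>: "partition_on V \<eta>"
    and R\<xi>: "\<forall>X\<in>\<xi>. density d X (\<rho>s X)" and E\<xi>: "\<rho> = tensor d V \<xi> \<rho>s"
    and R\<eta>: "\<forall>Y\<in>\<eta>. density d Y (\<sigma>s Y)" and E\<eta>: "\<rho> = tensor d V \<eta> \<sigma>s"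
  shows "\<rho> = tensor d V (meetP \<xi> \<eta>) (\<lambda>Z. marg d V Z \<rho>)"
proof (intro ext)
  fix a b
  have fxi: "finite \<xi>" using fV P\<xi> by (metis finite_UnionD partition_onD1)
  have feta: "finite \<eta>" using fV P\<eta> by (metis finite_UnionD partition_onD1)
  have tr\<xi>: "\<forall>X\<in>\<xi>. tr1 d X (\<rho>s X)" using R\<xi> density_tr1 by blast
  have tr\<eta>: "\<forall>Y\<in>\<eta>. tr1 d Y (\<sigma>s Y)" using R\<eta> density_tr1 by blast
  show "\<rho> a b = tensor d V (meetP \<xi> \<eta>) (\<lambda>Z. marg d V Z \<rho>) a b"
  proof (cases "a \<in> basis d V \<and> b \<in> basis d V")
    case False
    then show ?thesis using density_supp[OF D False] unfolding tensor_def by auto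
  next
    case True
    then have a: "a \<in> basis d V" and b: "b \<in> basis d V" by auto
    have XV: "X \<subseteq> V" if "X \<in> \<xi>" for X using that P\<xi> by (auto simp: partition_on_def)
    have YV: "Y \<subseteq> V" if "Y \<in> \<eta>" for Y using that P\<eta> by (auto simp: partition_on_def)
    define P where "P = {XY \<in> \<xi> \<times> \<eta>. fst XY \<inter> snd XY \<noteq> {}}"
    have "\<rho> a b = (\<Prod>X\<in>\<xi>. \<rho>s X (restrict a X) (restrict b X))"
      using E\<xi> tensor_eval[OF a b] by simp
    also have "\<dots> = (\<Prod>X\<in>\<xi>. \<Prod>Y\<in>\<eta>. if X \<inter> Y = {} then 1
                     else marg d V (X \<inter> Y) \<rho> (restrict a (X \<inter> Y)) (restrict b (X \<inter> Y)))"
    proof (rule prod.cong[OF refl])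
      fix X assume X: "X \<in> \<xi>"
      have aX: "restrict a X \<in> basis d X" and bX: "restrict b X \<in> basis d X"
        using restrict_basis[OF a XV[OF X]] restrict_basis[OF b XV[OF X]] by auto
      have "\<rho>s X (restrict a X) (restrict b X)
          = (\<Sum>c\<in>basis d (V - X). \<rho> (merge X (restrict a X) c) (merge X (restrict b X) c))"
        using M2[OF P\<xi> fV tr\<xi> X aX bX] E\<xi> by simp
      also have "\<dots> = (\<Prod>Y\<in>\<eta>. TT d X Y (\<sigma>s Y) (restrict (restrict a X) Y) (restrict (restrict b X) Y))"
        using G[OF P\<eta> fV XV[OF X] aX bX, of \<sigma>s] E\<eta> by simp
      also have "\<dots> = (\<Prod>Y\<in>\<eta>. if X \<inter> Y = {} then 1
                     else marg d V (X \<inter> Y) \<rho> (restrict a (X \<inter> Y)) (restrict b (X \<inter> Y)))"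
      proof (rule prod.cong[OF refl])
        fix Y assume Y: "Y \<in> \<eta>"
        show "TT d X Y (\<sigma>s Y) (restrict (restrict a X) Y) (restrict (restrict b X) Y) = (if X \<inter> Y = {} then 1
                     else marg d V (X \<inter> Y) \<rho> (restrict a (X \<inter> Y)) (restrict b (X \<inter> Y)))"
        proof (cases "X \<inter> Y = {}")
          case True
          then show ?thesis using T1[OF True aX bX] tr\<eta> Y by simp
        next
          case False
          have ZY: "X \<inter> Y \<subseteq> Y" by auto
          have aZ: "restrict a (X \<inter> Y) \<in> basis d (X \<inter> Y)" and bZ: "restrict b (X \<inter> Y) \<in> basis d (X \<inter> Y)"
            using restrict_basis[OF a, of "X \<inter> Y"] restrict_basis[OF b, of "X \<inter> Y"] XV[OF X] by blast+
          have "TT d X Y (\<sigma>s Y) (restrict (restrict a X) Y) (restrict (restrict b X) Y)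
              = TT d (X \<inter> Y) Y (\<sigma>s Y) (restrict a (X \<inter> Y)) (restrict b (X \<inter> Y))"
            using T3[OF a b, of X Y "\<sigma>s Y"] by simp
          also have "\<dots> = (\<Sum>c\<in>basis d (V - X \<inter> Y). \<rho> (merge (X \<inter> Y) (restrict a (X \<inter> Y)) c) (merge (X \<inter> Y) (restrict b (X \<inter> Y)) c))"
            using M_single[OF P\<eta> fV tr\<eta> Y ZY aZ bZ] E\<eta> by simp
          also have "\<dots> = marg d V (X \<inter> Y) \<rho> (restrict a (X \<inter> Y)) (restrict b (X \<inter> Y))"
            using aZ bZ by (simp add: marg_def)
          finally show ?thesis using False by simp
        qed
      qed
      finally show "\<rho>s X (restrict a X) (restrict b X) = (\<Prod>Y\<in>\<eta>. if X \<inter> Y = {} then 1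
                     else marg d V (X \<inter> Y) \<rho> (restrict a (X \<inter> Y)) (restrict b (X \<inter> Y)))" .
    qed
    also have "\<dots> = (\<Prod>XY\<in>\<xi> \<times> \<eta>. if fst XY \<inter> snd XY = {} then 1
                     else marg d V (fst XY \<inter> snd XY) \<rho> (restrict a (fst XY \<inter> snd XY)) (restrict b (fst XY \<inter> snd XY)))"
      by (simp add: prod.cartesian_product split_def)
    also have "\<dots> = (\<Prod>XY\<in>P. marg d V (fst XY \<inter> snd XY) \<rho> (restrict a (fst XY \<inter> snd XY)) (restrict b (fst XY \<inter> snd XY)))"
      unfolding P_def using fxi feta by (subst prod.inter_filter) (auto intro: prod.cong)
    also have "\<dots> = (\<Prod>Z\<in>(\<lambda>XY. fst XY \<inter> snd XY) ` P. marg d V Z \<rho> (restrict a Z) (restrict b Z))"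
    proof -
      have "inj_on (\<lambda>XY. fst XY \<inter> snd XY) P"
      proof (rule inj_onI)
        fix u w assume u: "u \<in> P" and w: "w \<in> P" and e: "fst u \<inter> snd u = fst w \<inter> snd w"
        then obtain i where i: "i \<in> fst u \<inter> snd u" unfolding P_def by auto
        then have "i \<in> fst w \<inter> snd w" using e by simp
        have u1: "fst u \<in> \<xi>" "snd u \<in> \<eta>" and w1: "fst w \<in> \<xi>" "snd w \<in> \<eta>"
          using u w unfolding P_def by auto
        have i2: "i \<in> fst w \<inter> snd w" using i e by simp
        have "fst u = fst w"
          using part_eq[OF P\<xi> u1(1) w1(1), of i] i i2 by blast
        moreover have "snd u = snd w"
          using part_eq[OF P\<eta> u1(2) w1(2), of i] i i2 by blast
        ultimately show "u = w" by (simp add: prod_eq_iff)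
      qed
      then show ?thesis by (simp add: prod.reindex)
    qed
    also have "(\<lambda>XY. fst XY \<inter> snd XY) ` P = meetP \<xi> \<eta>"
      unfolding P_def meetP_def by force
    also have "(\<Prod>Z\<in>meetP \<xi> \<eta>. marg d V Z \<rho> (restrict a Z) (restrict b Z)) = tensor d V (meetP \<xi> \<eta>) (\<lambda>Z. marg d V Z \<rho>) a b"
      using tensor_eval[OF a b] by simp
    finally show ?thesis .
  qed
qed



lemma finite_sites: "finite (sites n)" by (simp add: sites_def)

lemma partitions_finite: "finite (partitions n)"
proof -
  have "partitions n \<subseteq> Pow (Pow (sites n))"
    by (auto simp: partitions_def partition_on_def)
  then show ?thesis using finite_sites by (meson finite_Pow_iff finite_subset)
qed

lemma unc_density: "\<rho> \<in> unc d n \<xi> \<Longrightarrow> density d (sites n) \<rho>"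
  by (simp add: unc_def densities_def)

lemma part_sub: "partition_on V \<xi> \<Longrightarrow> X \<in> \<xi> \<Longrightarrow> X \<subseteq> V"
  by (auto simp: partition_on_def)

lemma unc_meet:
  assumes "\<xi> \<in> partitions n" "\<eta> \<in> partitions n" "\<rho> \<in> unc d n \<xi>" "\<rho> \<in> unc d n \<eta>"
  shows "meetP \<xi> \<eta> \<in> partitions n \<and> \<rho> \<in> unc d n (meetP \<xi> \<eta>)"
proof -
  have P1: "partition_on (sites n) \<xi>" and P2: "partition_on (sites n) \<eta>"
    using assms by (auto simp: partitions_def)
  have PM: "partition_on (sites n) (meetP \<xi> \<eta>)" by (rule meetP_partition[OF P1 P2])
  have D: "density d (sites n) \<rho>" using assms(3) by (rule unc_density)
  obtain \<rho>s where r1: "\<forall>X\<in>\<xi>. \<rho>s X \<in> densities d X" and e1: "\<rho> = tensor d (sites n) \<xi> \<rho>s"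
    using assms(3) unfolding unc_def by blast
  obtain \<sigma>s where r2: "\<forall>X\<in>\<eta>. \<sigma>s X \<in> densities d X" and e2: "\<rho> = tensor d (sites n) \<eta> \<sigma>s"
    using assms(4) unfolding unc_def by blast
  have eq: "\<rho> = tensor d (sites n) (meetP \<xi> \<eta>) (\<lambda>Z. marg d (sites n) Z \<rho>)"
    using meet_closed[OF finite_sites D P1 P2 _ e1 _ e2] r1 r2 by (simp add: densities_def)
  have md: "\<forall>Z\<in>meetP \<xi> \<eta>. marg d (sites n) Z \<rho> \<in> densities d Z"
    using marg_density[OF D part_sub[OF PM] finite_sites] by (simp add: densities_def)
  have Dm: "\<rho> \<in> densities d (sites n)" using D by (simp add: densities_def)
  have ex: "\<exists>\<rho>s. (\<forall>X\<in>meetP \<xi> \<eta>. \<rho>s X \<in> densities d X) \<and> \<rho> = tensor d (sites n) (meetP \<xi> \<eta>) \<rho>s"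
    by (rule exI[of _ "\<lambda>Z. marg d (sites n) Z \<rho>"]) (rule conjI[OF md eq])
  have "\<rho> \<in> unc d n (meetP \<xi> \<eta>)" unfolding unc_def mem_Collect_eq using Dm ex by (rule conjI)
  then show ?thesis using PM unfolding partitions_def by simp
qed

lemma unc_top:
  assumes "n \<ge> 1" "density d (sites n) \<rho>"
  shows "{sites n} \<in> partitions n \<and> \<rho> \<in> unc d n {sites n}"
proof -
  have ne: "sites n \<noteq> {}" using assms(1) by (auto simp: sites_def)
  have "\<rho> = tensor d (sites n) {sites n} (\<lambda>_. \<rho>)"
  proof (intro ext)
    fix a b show "\<rho> a b = tensor d (sites n) {sites n} (\<lambda>_. \<rho>) a b"
    proof (cases "a \<in> basis d (sites n) \<and> b \<in> basis d (sites n)")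
      case True then show ?thesis using restrict_basis_self[of a d "sites n"] restrict_basis_self[of b d "sites n"] by (simp add: tensor_def)
    next
      case False then show ?thesis using density_supp[OF assms(2) False] unfolding tensor_def by auto
    qed
  qed
  then show ?thesis using assms ne partition_on_space[OF ne]
    unfolding unc_def partitions_def densities_def by auto
qed

lemma exists_min:
  assumes n: "n \<ge> 1" and D: "density d (sites n) \<rho>"
  shows "\<exists>m\<in>partitions n. \<rho> \<in> unc d n m \<and> (\<forall>\<eta>\<in>partitions n. \<rho> \<in> unc d n \<eta> \<longrightarrow> refines m \<eta>)"
proof -
  define S where "S = {\<eta> \<in> partitions n. \<rho> \<in> unc d n \<eta>}"
  have fS: "finite S" unfolding S_def using partitions_finite by simp
  have neS: "S \<noteq> {}" using unc_top[OF n D] unfolding S_def by blast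
  have "\<exists>m\<in>S. \<forall>\<eta>\<in>F. refines m \<eta>" if "finite F" "F \<noteq> {}" "F \<subseteq> S" for F
    using that
  proof (induction F rule: finite_ne_induct)
    case (singleton x)
    then show ?case using refines_refl by blast
  next
    case (insert x F)
    then obtain m where m: "m \<in> S" "\<forall>\<eta>\<in>F. refines m \<eta>" by blast
    have x: "x \<in> S" using insert by blast
    have "meetP m x \<in> S" using unc_meet[of m n x \<rho> d] m(1) x unfolding S_def by blast
    moreover have "\<forall>\<eta>\<in>insert x F. refines (meetP m x) \<eta>"
      using m(2) meetP_refines[of m x] refines_trans by blast
    ultimately show ?case by blast
  qed
  from this[OF fS neS order.refl] show ?thesis unfolding S_def by blast
qed

lemma uncS_iff:
  assumes s: "s \<in> P_II n" and m: "m \<in> partitions n" "\<rho> \<in> unc d n m"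
    "\<forall>\<eta>\<in>partitions n. \<rho> \<in> unc d n \<eta> \<longrightarrow> refines m \<eta>"
  shows "\<rho> \<in> uncS d n s \<longleftrightarrow> m \<in> s"
proof
  assume "\<rho> \<in> uncS d n s"
  then obtain \<eta> where "\<eta> \<in> s" "\<rho> \<in> unc d n \<eta>" unfolding uncS_def by blast
  moreover have "\<eta> \<in> partitions n" using s \<open>\<eta> \<in> s\<close> unfolding P_II_def by blast
  ultimately show "m \<in> s" using m s unfolding P_II_def by blast
next
  assume "m \<in> s" then show "\<rho> \<in> uncS d n s" using m unfolding uncS_def by blast
qed

lemma C_char:
  assumes X: "\<Xi> \<subseteq> PIIs" "\<Xi> \<noteq> {}" and PI: "PIIs \<subseteq> P_II n" and D: "density d (sites n) \<rho>"
    and m: "m \<in> partitions n" "\<rho> \<in> unc d n m"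
    "\<forall>\<eta>\<in>partitions n. \<rho> \<in> unc d n \<eta> \<longrightarrow> refines m \<eta>"
  shows "\<rho> \<in> C_unc d n PIIs \<Xi> \<longleftrightarrow> m \<in> meet \<Xi> \<and> m \<notin> join_compl PIIs \<Xi>"
proof -
  have I: "\<And>s. s \<in> PIIs \<Longrightarrow> \<rho> \<in> uncS d n s \<longleftrightarrow> m \<in> s"
    using uncS_iff[OF _ m] PI by blast
  have Dm: "\<rho> \<in> densities d (sites n)" using D by (simp add: densities_def)
  have "\<rho> \<in> C_unc d n PIIs \<Xi> \<longleftrightarrow> (\<forall>s\<in>PIIs - \<Xi>. \<rho> \<notin> uncS d n s) \<and> (\<forall>s\<in>\<Xi>. \<rho> \<in> uncS d n s)"
    unfolding C_unc_def using Dm by blast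
  also have "\<dots> \<longleftrightarrow> (\<forall>s\<in>PIIs - \<Xi>. m \<notin> s) \<and> (\<forall>s\<in>\<Xi>. m \<in> s)"
    using I X by blast
  also have "\<dots> \<longleftrightarrow> m \<in> meet \<Xi> \<and> m \<notin> join_compl PIIs \<Xi>"
    unfolding meet_def join_compl_def by blast
  finally show ?thesis .
qed

lemma C_dens: "\<rho> \<in> C_unc d n PIIs \<Xi> \<Longrightarrow> \<Xi> \<noteq> {} \<Longrightarrow> density d (sites n) \<rho>"
proof -
  assume h: "\<rho> \<in> C_unc d n PIIs \<Xi>" "\<Xi> \<noteq> {}"
  then obtain s where "s \<in> \<Xi>" by blast
  then have "\<rho> \<in> uncS d n s" using h(1) unfolding C_unc_def by blast
  then obtain \<eta> where "\<rho> \<in> unc d n \<eta>" unfolding uncS_def by blast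
  then show ?thesis by (rule unc_density)
qed



lemma pure_density:
  fixes \<psi> :: "(nat \<Rightarrow> nat) \<Rightarrow> complex"
  assumes supp: "\<And>a. \<psi> a \<noteq> 0 \<Longrightarrow> a \<in> basis d V" and real: "\<And>a. cnj (\<psi> a) = \<psi> a"
    and tr: "(\<Sum>a\<in>basis d V. \<psi> a * \<psi> a) = 1"
  shows "density d V (\<lambda>a b. \<psi> a * \<psi> b)"
proof -
  have pos: "Im (\<Sum>a\<in>basis d V. \<Sum>b\<in>basis d V. cnj (v a) * (\<psi> a * \<psi> b) * v b) = 0 \<and>
        Re (\<Sum>a\<in>basis d V. \<Sum>b\<in>basis d V. cnj (v a) * (\<psi> a * \<psi> b) * v b) \<ge> 0" for v
  proof -
    define s where "s = (\<Sum>b\<in>basis d V. \<psi> b * v b)"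
    have cs: "cnj s = (\<Sum>a\<in>basis d V. cnj (v a) * \<psi> a)"
      unfolding s_def by (simp add: real mult.commute)
    have "(\<Sum>a\<in>basis d V. \<Sum>b\<in>basis d V. cnj (v a) * (\<psi> a * \<psi> b) * v b)
        = (\<Sum>a\<in>basis d V. cnj (v a) * \<psi> a) * (\<Sum>b\<in>basis d V. \<psi> b * v b)"
      unfolding sum_product by (simp add: mult_ac)
    also have "\<dots> = cnj s * s" by (subst cs) (simp only: s_def)
    also have "\<dots> = complex_of_real ((Re s)\<^sup>2 + (Im s)\<^sup>2)"
      using complex_mult_cnj[of s] by (simp add: mult.commute)
    finally show ?thesis by simp
  qed
  show ?thesis unfolding density_def using pos tr supp by auto
qed

definition e :: "nat \<Rightarrow> nat set \<Rightarrow> nat \<Rightarrow> nat" where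
  "e k X = restrict (\<lambda>_. k) X"

definition c0 :: complex where "c0 = complex_of_real (inverse (sqrt 2))"

lemma c0_sq: "c0 * c0 = 1/2"
proof -
  have h: "inverse (sqrt 2) * inverse (sqrt 2) = (1/2::real)"
    by (simp add: inverse_mult_distrib[symmetric] inverse_eq_divide)
  have "c0 * c0 = complex_of_real (inverse (sqrt 2) * inverse (sqrt 2))"
    by (simp only: c0_def of_real_mult)
  also have "\<dots> = 1/2" unfolding h by simp
  finally show ?thesis .
qed

lemma c0_nz: "c0 \<noteq> 0" using c0_sq by auto

lemma c0_real: "cnj c0 = c0" by (simp add: c0_def)

definition phi :: "nat set \<Rightarrow> (nat \<Rightarrow> nat) \<Rightarrow> complex" where
  "phi X p = (if p = e 0 X \<or> p = e 1 X then c0 else 0)"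

definition psi :: "(nat \<Rightarrow> nat) \<Rightarrow> nat \<Rightarrow> nat set set \<Rightarrow> (nat \<Rightarrow> nat) \<Rightarrow> complex" where
  "psi d n \<xi> a = (if a \<in> basis d (sites n) then \<Prod>X\<in>\<xi>. phi X (restrict a X) else 0)"

lemma e_basis: "\<forall>i\<in>X. 1 < d i \<Longrightarrow> k \<le> 1 \<Longrightarrow> e k X \<in> basis d X"
  by (auto simp: e_def basis_def)

lemma e_ne: "X \<noteq> {} \<Longrightarrow> e 0 X \<noteq> e 1 X"
  by (auto simp: e_def fun_eq_iff)

lemma phi_real: "cnj (phi X p) = phi X p" by (simp add: phi_def c0_real)

lemma phi_tr:
  assumes "X \<noteq> {}" "\<forall>i\<in>X. 1 < d i" "finite X"
  shows "(\<Sum>p\<in>basis d X. phi X p * phi X p) = 1"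
proof -
  have "(\<Sum>p\<in>basis d X. phi X p * phi X p) = (\<Sum>p\<in>basis d X. if p \<in> {e 0 X, e 1 X} then 1/2 else 0)"
    by (intro sum.cong refl) (auto simp: phi_def c0_sq)
  also have "\<dots> = (\<Sum>p\<in>basis d X \<inter> {e 0 X, e 1 X}. 1/2)"
    by (rule sum.inter_restrict[OF finite_basis[OF assms(3)], symmetric])
  also have "basis d X \<inter> {e 0 X, e 1 X} = {e 0 X, e 1 X}"
    using e_basis[OF assms(2), of 0] e_basis[OF assms(2), of 1] by auto
  also have "(\<Sum>p\<in>{e 0 X, e 1 X}. (1/2::complex)) = 1"
    using e_ne[OF assms(1)] by simp
  finally show ?thesis .
qed

lemma phi_supp: "\<forall>i\<in>X. 1 < d i \<Longrightarrow> phi X p \<noteq> 0 \<Longrightarrow> p \<in> basis d X"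
  using e_basis[of X d 0] e_basis[of X d 1] by (auto simp: phi_def split: if_splits)


lemma witness_unc:
  assumes \<xi>: "\<xi> \<in> partitions n" and dd: "\<forall>i\<in>sites n. 1 < d i"
  shows "(\<lambda>a b. psi d n \<xi> a * psi d n \<xi> b) \<in> unc d n \<xi>"
proof -
  let ?L = "sites n"
  have P: "partition_on ?L \<xi>" using \<xi> by (simp add: partitions_def)
  have fxi: "finite \<xi>" using P finite_sites by (metis finite_UnionD partition_onD1)
  have XL: "X \<subseteq> ?L" if "X \<in> \<xi>" for X using part_sub[OF P that] .
  have Xne: "X \<noteq> {}" if "X \<in> \<xi>" for X using P that by (auto simp: partition_on_def)
  have dX: "\<forall>i\<in>X. 1 < d i" if "X \<in> \<xi>" for X using dd XL[OF that] by auto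
  have fX: "finite X" if "X \<in> \<xi>" for X using XL[OF that] finite_sites finite_subset by blast
  have dens: "density d X (\<lambda>p q. phi X p * phi X q)" if X: "X \<in> \<xi>" for X
    by (rule pure_density[OF phi_supp[OF dX[OF X]] phi_real phi_tr[OF Xne[OF X] dX[OF X] fX[OF X]]])
  have tr: "(\<Sum>a\<in>basis d ?L. psi d n \<xi> a * psi d n \<xi> a) = 1"
  proof -
    have dj: "disjoint_family_on (\<lambda>Y. Y) \<xi>" using P
      by (auto simp: disjoint_family_on_def partition_on_def disjoint_def)
    have U: "\<Union>((\<lambda>Y. Y) ` \<xi>) = ?L" using P by (simp add: partition_on_def)
    have "(\<Sum>a\<in>basis d ?L. psi d n \<xi> a * psi d n \<xi> a) = (\<Sum>a\<in>basis d ?L. \<Prod>X\<in>\<xi>. phi X (restrict a X) * phi X (restrict a X))"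
      by (intro sum.cong refl) (simp add: psi_def prod.distrib)
    also have "\<dots> = (\<Prod>X\<in>\<xi>. \<Sum>p\<in>basis d X. phi X p * phi X p)"
      using sum_prod_blocks[OF fxi dj, where d=d and g="\<lambda>X p. phi X p * phi X p"] unfolding U by simp
    also have "\<dots> = 1" using phi_tr Xne dX fX by simp
    finally show ?thesis .
  qed
  have D: "density d ?L (\<lambda>a b. psi d n \<xi> a * psi d n \<xi> b)"
    by (rule pure_density[OF _ _ tr]) (auto simp: psi_def phi_real split: if_splits)
  have T: "(\<lambda>a b. psi d n \<xi> a * psi d n \<xi> b) = tensor d ?L \<xi> (\<lambda>X p q. phi X p * phi X q)"
    by (intro ext) (simp add: tensor_def psi_def prod.distrib)
  have ex: "\<exists>\<rho>s. (\<forall>X\<in>\<xi>. \<rho>s X \<in> densities d X) \<and> (\<lambda>a b. psi d n \<xi> a * psi d n \<xi> b) = tensor d ?L \<xi> \<rho>s"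
    by (rule exI[of _ "\<lambda>X p q. phi X p * phi X q"], rule conjI[OF _ T]) (simp add: densities_def dens)
  have Dm: "(\<lambda>a b. psi d n \<xi> a * psi d n \<xi> b) \<in> densities d ?L" using D by (simp add: densities_def)
  show ?thesis unfolding unc_def mem_Collect_eq using Dm ex by (rule conjI)
qed

lemma swap:
  assumes P: "partition_on V \<eta>" and Y: "Y \<in> \<eta>" and E: "\<rho> = tensor d V \<eta> \<sigma>s"
    and a: "a \<in> basis d V" and b: "b \<in> basis d V" and a': "a' \<in> basis d V" and b': "b' \<in> basis d V"
  shows "\<rho> a b * \<rho> a' b' = \<rho> (merge Y a a') (merge Y b b') * \<rho> (merge Y a' a) (merge Y b' b)"
proof -
  have YV: "Y \<subseteq> V" using part_sub[OF P Y] .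
  have rs: "restrict (merge Y x x') Y = restrict x Y" for x x'
    by (auto simp: merge_def fun_eq_iff)
  have rd: "Y' \<in> \<eta> \<Longrightarrow> Y' \<noteq> Y \<Longrightarrow> restrict (merge Y x x') Y' = restrict x' Y'" for x x' Y'
    using part_disj[OF P Y] by (simp add: restrict_merge_disj)
  have "\<rho> (merge Y a a') (merge Y b b') * \<rho> (merge Y a' a) (merge Y b' b)
     = (\<Prod>Y'\<in>\<eta>. \<sigma>s Y' (restrict (merge Y a a') Y') (restrict (merge Y b b') Y') *
                  \<sigma>s Y' (restrict (merge Y a' a) Y') (restrict (merge Y b' b) Y'))"
    unfolding E prod.distrib
    by (simp add: tensor_eval merge_in2[OF a a' YV] merge_in2[OF b b' YV] merge_in2[OF a' a YV] merge_in2[OF b' b YV])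
  also have "\<dots> = (\<Prod>Y'\<in>\<eta>. \<sigma>s Y' (restrict a Y') (restrict b Y') * \<sigma>s Y' (restrict a' Y') (restrict b' Y'))"
  proof (rule prod.cong[OF refl])
    fix Y' assume Y': "Y' \<in> \<eta>"
    show "\<sigma>s Y' (restrict (merge Y a a') Y') (restrict (merge Y b b') Y') *
                  \<sigma>s Y' (restrict (merge Y a' a) Y') (restrict (merge Y b' b) Y') =
          \<sigma>s Y' (restrict a Y') (restrict b Y') * \<sigma>s Y' (restrict a' Y') (restrict b' Y')"
    proof (cases "Y' = Y")
      case True then show ?thesis by (simp add: rs)
    next
      case False then show ?thesis by (simp add: rd[OF Y'] mult.commute)
    qed
  qed
  also have "\<dots> = \<rho> a b * \<rho> a' b'"
    unfolding E prod.distrib by (simp add: tensor_eval a b a' b')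
  finally show ?thesis by simp
qed



lemma witness_min:
  assumes \<xi>: "\<xi> \<in> partitions n" and dd: "\<forall>i\<in>sites n. 1 < d i"
    and \<eta>: "\<eta> \<in> partitions n" and W: "(\<lambda>a b. psi d n \<xi> a * psi d n \<xi> b) \<in> unc d n \<eta>"
  shows "refines \<xi> \<eta>"
  unfolding refines_def
proof
  fix X assume X: "X \<in> \<xi>"
  let ?L = "sites n"
  let ?W = "\<lambda>a b. psi d n \<xi> a * psi d n \<xi> b"
  have P: "partition_on ?L \<xi>" using \<xi> by (simp add: partitions_def)
  have P\<eta>: "partition_on ?L \<eta>" using \<eta> by (simp add: partitions_def)
  have fxi: "finite \<xi>" using P finite_sites by (metis finite_UnionD partition_onD1)
  have XL: "X' \<subseteq> ?L" if "X' \<in> \<xi>" for X' using part_sub[OF P that] .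
  show "\<exists>Y\<in>\<eta>. X \<subseteq> Y"
  proof (rule ccontr)
    assume nY: "\<not> (\<exists>Y\<in>\<eta>. X \<subseteq> Y)"
    have "X \<noteq> {}" using P X by (auto simp: partition_on_def)
    then obtain i where i: "i \<in> X" by blast
    have iL: "i \<in> ?L" using i XL[OF X] by auto
    then obtain Y where Y: "Y \<in> \<eta>" "i \<in> Y" using P\<eta> by (metis UnionE partition_onD1)
    then obtain j where j: "j \<in> X" "j \<notin> Y" using nY by blast
    have jL: "j \<in> ?L" using j XL[OF X] by auto
    obtain \<sigma>s where E: "?W = tensor d ?L \<eta> \<sigma>s" using W unfolding unc_def by blast
    define z where "z = e 0 ?L"
    define ov where "ov = restrict (\<lambda>k. if k \<in> X then 1 else 0::nat) ?L"
    have z: "z \<in> basis d ?L" unfolding z_def using e_basis[of ?L d 0] dd by simp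
    have ov: "ov \<in> basis d ?L" unfolding ov_def using dd by (auto simp: basis_def)
    have YL: "Y \<subseteq> ?L" using part_sub[OF P\<eta> Y(1)] .
    define q where "q = merge Y ov z"
    have q: "q \<in> basis d ?L" unfolding q_def by (rule merge_in2[OF ov z YL])
    have rz: "restrict z X' = e 0 X'" if "X' \<in> \<xi>" for X'
      using XL[OF that] by (auto simp: z_def e_def fun_eq_iff)
    have ro: "restrict ov X' = (if X' = X then e 1 X' else e 0 X')" if "X' \<in> \<xi>" for X'
    proof (cases "X' = X")
      case True then show ?thesis using XL[OF X] by (auto simp: ov_def e_def fun_eq_iff)
    next
      case False
      then have "X' \<inter> X = {}" using part_disj[OF P that X] by blast
      then show ?thesis using XL[OF that] False by (auto simp: ov_def e_def fun_eq_iff)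
    qed
    have pz: "psi d n \<xi> z \<noteq> 0"
    proof -
      have "psi d n \<xi> z = (\<Prod>X'\<in>\<xi>. c0)"
        using z rz by (simp add: psi_def phi_def)
      then show ?thesis using c0_nz by simp
    qed
    have po: "psi d n \<xi> ov \<noteq> 0"
    proof -
      have "phi X' (restrict ov X') = c0" if "X' \<in> \<xi>" for X'
        using ro[OF that] by (auto simp: phi_def)
      then have "psi d n \<xi> ov = (\<Prod>X'\<in>\<xi>. c0)"
        using ov by (simp add: psi_def)
      then show ?thesis using c0_nz by simp
    qed
    have pq: "psi d n \<xi> q = 0"
    proof -
      have qi: "restrict q X i = 1" using i iL Y(2) by (simp add: q_def merge_def ov_def)
      have qj: "restrict q X j = 0" using j jL by (simp add: q_def merge_def z_def e_def)
      have e0i: "e 0 X i = 0" using i by (simp add: e_def)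
      have e1j: "e 1 X j = 1" using j by (simp add: e_def)
      have "restrict q X \<noteq> e 0 X"
      proof
        assume "restrict q X = e 0 X"
        then have "restrict q X i = e 0 X i" by (rule arg_cong)
        then show False using qi e0i by simp
      qed
      moreover have "restrict q X \<noteq> e 1 X"
      proof
        assume "restrict q X = e 1 X"
        then have "restrict q X j = e 1 X j" by (rule arg_cong)
        then show False using qj e1j by simp
      qed
      ultimately have "phi X (restrict q X) = 0" by (simp add: phi_def)
      then have "(\<Prod>X'\<in>\<xi>. phi X' (restrict q X')) = 0" using fxi X by (simp add: prod_zero_iff) blast
      then show ?thesis using q by (simp add: psi_def)
    qed
    have "?W z ov * ?W z z = ?W (merge Y z z) (merge Y ov z) * ?W (merge Y z z) (merge Y z ov)"
      using swap[OF P\<eta> Y(1) E z ov z z] by simp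
    also have "\<dots> = 0" using pq unfolding q_def by simp
    finally show False using pz po by simp
  qed
qed

lemma witness_full:
  assumes \<xi>: "\<xi> \<in> partitions n" and dd: "\<forall>i\<in>sites n. 1 < d i"
  shows "\<exists>\<rho>. density d (sites n) \<rho> \<and> \<rho> \<in> unc d n \<xi> \<and> (\<forall>\<eta>\<in>partitions n. \<rho> \<in> unc d n \<eta> \<longrightarrow> refines \<xi> \<eta>)"
  using witness_unc[OF \<xi> dd] witness_min[OF \<xi> dd] unc_density by blast

theorem proposition2:
  fixes n :: nat and d :: "nat \<Rightarrow> nat"
    and PIIs :: "nat set set set set" and \<Xi> \<Upsilon> :: "nat set set set set"
  assumes "n \<ge> 1"
    and "\<forall>i\<in>sites n. 1 < d i"
    and "PIIs \<subseteq> P_II n" and "PIIs \<noteq> {}"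
    and "\<Xi> \<in> P_III PIIs" and "\<Upsilon> \<in> P_III PIIs"
  shows "C_unc d n PIIs \<Xi> = C_unc d n PIIs \<Upsilon> \<longleftrightarrow>
    (meet \<Xi> \<inter> join_compl PIIs \<Upsilon> \<subseteq> join_compl PIIs \<Xi> \<and>
     meet \<Xi> \<subseteq> join_compl PIIs \<Xi> \<union> meet \<Upsilon> \<and>
     meet \<Upsilon> \<inter> join_compl PIIs \<Xi> \<subseteq> join_compl PIIs \<Upsilon> \<and>
     meet \<Upsilon> \<subseteq> join_compl PIIs \<Upsilon> \<union> meet \<Xi>)"
proof -
  have X: "\<Xi> \<subseteq> PIIs" "\<Xi> \<noteq> {}" and U: "\<Upsilon> \<subseteq> PIIs" "\<Upsilon> \<noteq> {}"
    using assms(5,6) by (auto simp: P_III_def)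
  have mp: "meet Z \<subseteq> partitions n" if Zs: "Z \<subseteq> PIIs" and Zn: "Z \<noteq> {}" for Z
  proof
    fix \<xi> assume "\<xi> \<in> meet Z"
    obtain s where "s \<in> Z" using Zn by blast
    then have "\<xi> \<in> s" "s \<in> P_II n" using \<open>\<xi> \<in> meet Z\<close> Zs assms(3) by (auto simp: meet_def)
    then show "\<xi> \<in> partitions n" by (auto simp: P_II_def)
  qed
  have dir: "meet A - join_compl PIIs A \<subseteq> meet B - join_compl PIIs B"
    if eq: "C_unc d n PIIs A = C_unc d n PIIs B" and A: "A \<subseteq> PIIs" "A \<noteq> {}" and B: "B \<subseteq> PIIs" "B \<noteq> {}" for A B
  proof
    fix \<xi> assume x: "\<xi> \<in> meet A - join_compl PIIs A"
    then have xp: "\<xi> \<in> partitions n" using mp[OF A] by blast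
    obtain \<rho> where r: "density d (sites n) \<rho>" "\<rho> \<in> unc d n \<xi>"
      "\<forall>\<eta>\<in>partitions n. \<rho> \<in> unc d n \<eta> \<longrightarrow> refines \<xi> \<eta>"
      using witness_full[OF xp assms(2)] by blast
    have "\<rho> \<in> C_unc d n PIIs A" using C_char[OF A assms(3) r(1) xp r(2) r(3)] x by blast
    then have "\<rho> \<in> C_unc d n PIIs B" using eq by simp
    then show "\<xi> \<in> meet B - join_compl PIIs B" using C_char[OF B assms(3) r(1) xp r(2) r(3)] by blast
  qed
  have rev: "C_unc d n PIIs A \<subseteq> C_unc d n PIIs B"
    if eq: "meet A - join_compl PIIs A = meet B - join_compl PIIs B" and A: "A \<subseteq> PIIs" "A \<noteq> {}" and B: "B \<subseteq> PIIs" "B \<noteq> {}" for A B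
  proof
    fix \<rho> assume r: "\<rho> \<in> C_unc d n PIIs A"
    have D: "density d (sites n) \<rho>" using C_dens[OF r A(2)] .
    obtain m where m: "m \<in> partitions n" "\<rho> \<in> unc d n m" "\<forall>\<eta>\<in>partitions n. \<rho> \<in> unc d n \<eta> \<longrightarrow> refines m \<eta>"
      using exists_min[OF assms(1) D] by blast
    have "m \<in> meet A - join_compl PIIs A" using C_char[OF A assms(3) D m] r by blast
    then have "m \<in> meet B - join_compl PIIs B" using eq by simp
    then show "\<rho> \<in> C_unc d n PIIs B" using C_char[OF B assms(3) D m] by blast
  qed
  have "C_unc d n PIIs \<Xi> = C_unc d n PIIs \<Upsilon> \<longleftrightarrow>
        meet \<Xi> - join_compl PIIs \<Xi> = meet \<Upsilon> - join_compl PIIs \<Upsilon>"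
  proof
    assume "C_unc d n PIIs \<Xi> = C_unc d n PIIs \<Upsilon>"
    then show "meet \<Xi> - join_compl PIIs \<Xi> = meet \<Upsilon> - join_compl PIIs \<Upsilon>"
      using dir[OF _ X U] dir[OF _ U X] by (metis subset_antisym)
  next
    assume "meet \<Xi> - join_compl PIIs \<Xi> = meet \<Upsilon> - join_compl PIIs \<Upsilon>"
    then show "C_unc d n PIIs \<Xi> = C_unc d n PIIs \<Upsilon>"
      using rev[OF _ X U] rev[OF _ U X] by (metis subset_antisym)
  qed
  also have "\<dots> \<longleftrightarrow> (meet \<Xi> \<inter> join_compl PIIs \<Upsilon> \<subseteq> join_compl PIIs \<Xi> \<and>
     meet \<Xi> \<subseteq> join_compl PIIs \<Xi> \<union> meet \<Upsilon> \<and>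
     meet \<Upsilon> \<inter> join_compl PIIs \<Xi> \<subseteq> join_compl PIIs \<Upsilon> \<and>
     meet \<Upsilon> \<subseteq> join_compl PIIs \<Upsilon> \<union> meet \<Xi>)"
    by blast
  finally show ?thesis .
qed


end
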